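(* Let $n,m\in\mathbb Z$, $k\le n+m$, and $a,b,q,p\in\mathbb C$ with $|p|<1$. Then \[ \binom{n+m}{k}_{a,b;q,p}=\sum_{j=k-m}^{n}\binom nj_{a,b;q,p}\binom{m}{k-j}_{aq^{2n-j},bq^{n+j};q,p}\prod_{i=1}^{k-j}W_{a,b;q,p}(i+j,n-j). \]
   Context: $\theta(x;p)=\prod_{j\ge0}(1-p^jx)(1-p^{j+1}/x)$, $\theta(x_1,\dots,x_\ell;p)=\prod_i\theta(x_i;p)$; parameters are such that denominators below do not vanish. Sum convention: $\sum_{j=l}^mA_j=A_l+\dots+A_m$ if $m>l-1$, $0$ if $m=l-1$, $-A_{l-1}-\dots-A_{m+1}$ if $m<l-1$. Product convention: $\prod_{j=l}^mA_j=A_l\cdots A_m$ if $m>l-1$, $1$ if $m=l-1$, $A_{l-1}^{-1}\cdots A_{m+1}^{-1}$ if $m<l-1$. For parameters $(a,b)$: $w_{a,b;q,p}(s,t)=\frac{\theta(aq^{s+2t},bq^{2s+t-2},aq^{t-s-1}/b;p)}{\theta(aq^{s+2t-2},bq^{2s+t},aq^{t-s+1}/b;p)}q$, $W_{a,b;q,p}(s,t)=\prod_{j=1}^tw_{a,b;q,p}(s,j)$, and $\binom nk_{a,b;q,p}$ ($n,k\in\mathbb Z$) is the unique family with $\binom n0_{a,b;q,p}=\binom nn_{a,b;q,p}=1$ and $\binom{n+1}k_{a,b;q,p}=\binom nk_{a,b;q,p}+\binom n{k-1}_{a,b;q,p}W_{a,b;q,p}(k,n+1-k)$ for $(n+1,k)\ne(0,0)$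 (closed form $\frac{(q^{1+k},aq^{1+k},bq^{1+k},aq^{1-k}/b;q,p)_{n-k}}{(q,aq,bq^{1+2k},aq/b;q,p)_{n-k}}$ with $(x;q,p)_r=\prod_{i=0}^{r-1}\theta(xq^i;p)$). The coefficient $\binom{\cdot}{\cdot}_{aq^{2n-j},bq^{n+j};q,p}$ is this with $(a,b)$ replaced by $(aq^{2n-j},bq^{n+j})$. *)

theory Defs
  imports "HOL-Analysis.Analysis"
begin

definition theta :: "complex \<Rightarrow> complex \<Rightarrow> complex" where
  "theta p x = (\<Prod>j. (1 - p ^ j * x) * (1 - p ^ (Suc j) / x))"

definition gsum :: "int \<Rightarrow> int \<Rightarrow> (int \<Rightarrow> complex) \<Rightarrow> complex" where
  "gsum l m A =
     (if m > l - 1 then (\<Sum>j\<in>{l..m}. A j)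
      else if m = l - 1 then 0
      else - (\<Sum>j\<in>{m+1..l-1}. A j))"

definition gprod :: "int \<Rightarrow> int \<Rightarrow> (int \<Rightarrow> complex) \<Rightarrow> complex" where
  "gprod l m A =
     (if m > l - 1 then (\<Prod>j\<in>{l..m}. A j)
      else if m = l - 1 then 1
      else (\<Prod>j\<in>{m+1..l-1}. inverse (A j)))"

definition ew :: "complex \<Rightarrow> complex \<Rightarrow> complex \<Rightarrow> complex \<Rightarrow> int \<Rightarrow> int \<Rightarrow> complex" where
  "ew a b q p s t =
     (theta p (a * q powi (s + 2 * t)) * theta p (b * q powi (2 * s + t - 2))
        * theta p (a * q powi (t - s - 1) / b))
     / (theta p (a * q powi (s + 2 * t - 2)) * theta p (b * q powi (2 * s + t))
        * theta p (a * q powi (t - s + 1) / b)) * q"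

definition eW :: "complex \<Rightarrow> complex \<Rightarrow> complex \<Rightarrow> complex \<Rightarrow> int \<Rightarrow> int \<Rightarrow> complex" where
  "eW a b q p s t = gprod 1 t (\<lambda>j. ew a b q p s j)"

definition ebinom_family :: "complex \<Rightarrow> complex \<Rightarrow> complex \<Rightarrow> complex \<Rightarrow> (int \<Rightarrow> int \<Rightarrow> complex) \<Rightarrow> bool" where
  "ebinom_family a b q p f \<longleftrightarrow>
     (\<forall>n. f n 0 = 1) \<and> (\<forall>n. f n n = 1) \<and>
     (\<forall>n k. (n + 1, k) \<noteq> (0, 0) \<longrightarrow>
        f (n + 1) k = f n k + f n (k - 1) * eW a b q p k (n + 1 - k))"

definition ebinom :: "complex \<Rightarrow> complex \<Rightarrow> complex \<Rightarrow> complex \<Rightarrow> int \<Rightarrow> int \<Rightarrow> complex" where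
  "ebinom a b q p n k = (THE f. ebinom_family a b q p f) n k"

end

theory Submission
  imports Defs
begin


lemma gprod_0[simp]: "gprod 1 0 A = 1"
  by (simp add: gprod_def)

lemma gprod_step:
  assumes "\<And>j. A j \<noteq> 0"
  shows "gprod l m A = gprod l (m-1) A * A m"
proof -
  consider "m > l" | "m = l" | "m = l - 1" | "m < l - 1" by linarith
  then show ?thesis
  proof cases
    case 1
    have "{l..m} = insert m {l..m-1}" using 1 by auto
    then show ?thesis using 1 by (simp add: gprod_def mult.commute)
  next
    case 2 then show ?thesis by (simp add: gprod_def)
  next
    case 3 then show ?thesis using assms by (simp add: gprod_def)
  next
    case 4
    have "{m..l-1} = insert m {m+1..l-1}" using 4 by auto
    then show ?thesis using 4 assms by (simp add: gprod_def)
  qed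
qed

lemma gprod_nonzero: "(\<And>j. A j \<noteq> 0) \<Longrightarrow> gprod l m A \<noteq> 0"
  by (simp add: gprod_def)

lemma gprod_one: "gprod l m (\<lambda>_. 1) = 1"
  by (simp add: gprod_def)

lemma gprod_shift:
  assumes A: "\<And>j. A j \<noteq> 0"
  shows "gprod 1 (a+b) A = gprod 1 a A * gprod 1 b (\<lambda>i. A (i+a))"
proof (induction b rule: int_induct[where k=0])
  case base then show ?case by simp
next
  case (step1 i)
  have "gprod 1 (a+(i+1)) A = gprod 1 (a+i) A * A (a+i+1)"
    using gprod_step[of A 1 "a+(i+1)", OF A] by (simp add: add.assoc)
  moreover have "gprod 1 (i+1) (\<lambda>i. A (i+a)) = gprod 1 i (\<lambda>i. A (i+a)) * A (a+i+1)"
    using gprod_step[of "\<lambda>i. A (i+a)" 1 "i+1"] A by (simp add: ac_simps)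
  ultimately show ?case using step1 by simp
next
  case (step2 i)
  have e1: "gprod 1 (a+i) A = gprod 1 (a+(i-1)) A * A (a+i)"
    using gprod_step[of A 1 "a+i", OF A] by (simp add: algebra_simps)
  have e2: "gprod 1 i (\<lambda>i. A (i+a)) = gprod 1 (i-1) (\<lambda>i. A (i+a)) * A (a+i)"
    using gprod_step[of "\<lambda>i. A (i+a)" 1 "i"] A by (simp add: ac_simps)
  from step2 e1 e2 have "gprod 1 (a+(i-1)) A * A (a+i) = gprod 1 a A * gprod 1 (i-1) (\<lambda>i. A (i+a)) * A (a+i)"
    by simp
  then show ?case using A[of "a+i"] by simp
qed

lemma gsum_step: "gsum l n A = A l + gsum (l+1) n A"
proof -
  consider "n > l" | "n = l" | "n = l - 1" | "n < l - 1" by linarith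
  then show ?thesis
  proof cases
    case 1
    have "{l..n} = insert l {l+1..n}" using 1 by auto
    then show ?thesis using 1 by (simp add: gsum_def)
  next
    case 2 then show ?thesis by (simp add: gsum_def)
  next
    case 3 then show ?thesis by (simp add: gsum_def)
  next
    case 4
    have "{n+1..l} = insert l {n+1..l-1}" using 4 by auto
    then show ?thesis using 4 by (simp add: gsum_def)
  qed
qed

lemma gsum_single: "gsum n n A = A n"
  by (simp add: gsum_def)

lemma gsum_delta: "k \<le> n \<Longrightarrow> gsum k n (\<lambda>j. if j = k then c else 0) = c"
  by (simp add: gsum_def)

lemma gsum_zero: "gsum l n (\<lambda>_. 0) = 0"
  by (simp add: gsum_def)

lemma gsum_lin: "gsum l n (\<lambda>j. A j + B j * c - E j) = gsum l n A + gsum l n B * c - gsum l n E"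
  by (simp add: gsum_def sum.distrib sum_subtractf sum_distrib_right sum_distrib_left algebra_simps)




definition famW :: "(int \<Rightarrow> int \<Rightarrow> complex) \<Rightarrow> (int \<Rightarrow> int \<Rightarrow> complex) \<Rightarrow> bool" where
  "famW W f \<longleftrightarrow>
     (\<forall>n. f n 0 = 1) \<and> (\<forall>n. f n n = 1) \<and>
     (\<forall>n k. (n + 1, k) \<noteq> (0, 0) \<longrightarrow>
        f (n + 1) k = f n k + f n (k - 1) * W k (n + 1 - k))"

lemma famW_rec: "famW W f \<Longrightarrow> (n + 1, k) \<noteq> (0, 0) \<Longrightarrow>
        f (n + 1) k = f n k + f n (k - 1) * W k (n + 1 - k)"
  unfolding famW_def by blast

lemma famW_0: "famW W f \<Longrightarrow> f n 0 = 1" unfolding famW_def by blast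
lemma famW_diag: "famW W f \<Longrightarrow> f n n = 1" unfolding famW_def by blast

locale wts =
  fixes W :: "int \<Rightarrow> int \<Rightarrow> complex"
  assumes Wnz: "\<And>s t. W s t \<noteq> 0" and W0: "\<And>s. W s 0 = 1"
begin

lemma fam_above:
  assumes f: "famW W f" and "n \<noteq> -1"
  shows "f n (n+1) = 0"
proof -
  have "f (n+1) (n+1) = f n (n+1) + f n (n+1-1) * W (n+1) (n+1-(n+1))"
    using famW_rec[OF f, of n "n+1"] assms by simp
  then show ?thesis using famW_diag[OF f, of "n+1"] famW_diag[OF f, of n] W0 by simp
qed

lemma fam_row0:
  assumes f: "famW W f"
  shows "f 0 k = (if k = 0 then 1 else 0)"
proof -
  have pos: "\<forall>n\<ge>0. f n (n + 1 + int d) = 0" for d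
  proof (induction d)
    case 0 then show ?case using fam_above[OF f] by auto
  next
    case (Suc d)
    show ?case
    proof (intro allI impI)
      fix n :: int assume n: "n \<ge> 0"
      have "f (n+1) (n+2+int d) = f n (n+2+int d) + f n (n+2+int d-1) * W (n+2+int d) (n+1-(n+2+int d))"
        using famW_rec[OF f, of n "n+2+int d"] n by simp
      moreover have "f (n+1) (n+2+int d) = 0" using Suc[rule_format, of "n+1"] n by (simp add: ac_simps)
      moreover have "f n (n+2+int d-1) = 0" using Suc[rule_format, of n] n by (simp add: ac_simps)
      ultimately show "f n (n + 1 + int (Suc d)) = 0" by (simp add: ac_simps)
    qed
  qed
  have neg: "\<forall>n\<ge>0. f n (-1 - int d) = 0" for d
  proof (induction d)
    case 0
    show ?case
    proof (intro allI impI)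
      fix n :: int assume n: "n \<ge> 0"
      have "f (n+1) 0 = f n 0 + f n (0-1) * W 0 (n+1-0)"
        using famW_rec[OF f, of n 0] n by simp
      then show "f n (-1 - int 0) = 0" using famW_0[OF f] Wnz by simp
    qed
  next
    case (Suc d)
    show ?case
    proof (intro allI impI)
      fix n :: int assume n: "n \<ge> 0"
      have "f (n+1) (-1-int d) = f n (-1-int d) + f n (-1-int d-1) * W (-1-int d) (n+1-(-1-int d))"
        using famW_rec[OF f, of n "-1-int d"] n by simp
      moreover have "f (n+1) (-1-int d) = 0" using Suc[rule_format, of "n+1"] n by simp
      moreover have "f n (-1-int d) = 0" using Suc[rule_format, of n] n by simp
      ultimately show "f n (-1 - int (Suc d)) = 0" using Wnz by (simp add: algebra_simps)
    qed
  qed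
  show ?thesis
  proof (cases "k = 0")
    case True then show ?thesis using famW_0[OF f] by simp
  next
    case False
    then consider "k > 0" | "k < 0" by linarith
    then show ?thesis
    proof cases
      case 1
      then have "k = 0 + 1 + int (nat (k-1))" by simp
      then show ?thesis using pos[of "nat (k-1)"] 1 by (metis order_refl less_irrefl)
    next
      case 2
      then have "k = -1 - int (nat (-k-1))" by simp
      then show ?thesis using neg[of "nat (-k-1)"] 2 by (metis order_refl less_irrefl)
    qed
  qed
qed

lemma fam_unique:
  assumes f: "famW W f" and g: "famW W g"
  shows "f = g"
proof -
  have row: "\<forall>k. f n k = g n k" for n
  proof (induction n rule: int_induct[where k=0])
    case base then show ?case using fam_row0[OF f] fam_row0[OF g] by simp
  next
    case (step1 i)
    show ?case
    proof
      fix k :: int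
      have "(i+1,k) \<noteq> (0,0)" using step1 by simp
      then show "f (i+1) k = g (i+1) k"
        using famW_rec[OF f, of i k] famW_rec[OF g, of i k] step1(2) by simp
    qed
  next
    case (step2 i)
    have up: "f (i-1) (int d) = g (i-1) (int d)" for d
    proof (induction d)
      case 0 then show ?case using famW_0[OF f] famW_0[OF g] by simp
    next
      case (Suc d)
      have "(i-1+1, int d + 1) \<noteq> (0,0)" by simp
      then have "f i (int d + 1) = f (i-1) (int d + 1) + f (i-1) (int d) * W (int d + 1) (i - (int d + 1))"
           "g i (int d + 1) = g (i-1) (int d + 1) + g (i-1) (int d) * W (int d + 1) (i - (int d + 1))"
        using famW_rec[OF f, of "i-1" "int d + 1"] famW_rec[OF g, of "i-1" "int d + 1"] by simp_all
      then show ?case using Suc step2(2) by (simp add: add.commute)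
    qed
    have dn: "f (i-1) (- int d) = g (i-1) (- int d)" for d
    proof (induction d)
      case 0 then show ?case using famW_0[OF f] famW_0[OF g] by simp
    next
      case (Suc d)
      show ?case
      proof (cases "i = 0 \<and> d = 0")
        case True then show ?thesis using famW_diag[OF f, of "-1"] famW_diag[OF g, of "-1"] by simp
      next
        case False
        then have "(i-1+1, - int d) \<noteq> (0,0)" by simp
        then have "f i (- int d) = f (i-1) (- int d) + f (i-1) (- int d - 1) * W (- int d) (i + int d)"
           "g i (- int d) = g (i-1) (- int d) + g (i-1) (- int d - 1) * W (- int d) (i + int d)"
          using famW_rec[OF f, of "i-1" "- int d"] famW_rec[OF g, of "i-1" "- int d"] by simp_all
        then have "f (i-1) (- int d - 1) * W (- int d) (i + int d) = g (i-1) (- int d - 1) * W (- int d) (i + int d)"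
          using Suc step2(2) by (metis add_left_cancel)
        then have "f (i-1) (- int d - 1) = g (i-1) (- int d - 1)"
          using Wnz[of "- int d" "i + int d"] by (metis mult_right_cancel)
        moreover have "- int (Suc d) = - int d - 1" by simp
        ultimately show ?thesis by metis
      qed
    qed
    show ?case
    proof
      fix k :: int
      show "f (i-1) k = g (i-1) k"
      proof (cases "k \<ge> 0")
        case True then show ?thesis using up[of "nat k"] by simp
      next
        case False then show ?thesis using dn[of "nat (-k)"] by simp
      qed
    qed
  qed
  then show ?thesis by (auto intro!: ext)
qed

end



primrec upv :: "(int \<Rightarrow> int \<Rightarrow> complex) \<Rightarrow> int \<Rightarrow> (int \<Rightarrow> complex) \<Rightarrow> nat \<Rightarrow> complex" where
  "upv W n h 0 = 1"
| "upv W n h (Suc i) = h (int i + 1) - upv W n h i * W (int i + 1) (n - int i)"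

primrec dnv :: "(int \<Rightarrow> int \<Rightarrow> complex) \<Rightarrow> int \<Rightarrow> (int \<Rightarrow> complex) \<Rightarrow> nat \<Rightarrow> complex" where
  "dnv W n h 0 = 1"
| "dnv W n h (Suc j) = (h (- int j) - dnv W n h j) / W (- int j) (n + int j + 1)"

definition bwd :: "(int \<Rightarrow> int \<Rightarrow> complex) \<Rightarrow> int \<Rightarrow> (int \<Rightarrow> complex) \<Rightarrow> int \<Rightarrow> complex" where
  "bwd W n h k = (if k \<ge> 0 then upv W n h (nat k) else dnv W n h (nat (-k)))"

definition delta0 :: "complex \<Rightarrow> int \<Rightarrow> complex" where
  "delta0 c k = (if k = 0 then c else 0)"

primrec posr :: "(int \<Rightarrow> int \<Rightarrow> complex) \<Rightarrow> nat \<Rightarrow> int \<Rightarrow> complex" where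
  "posr W 0 = delta0 1"
| "posr W (Suc i) = (\<lambda>k. posr W i k + posr W i (k-1) * W k (int i + 1 - k))"

primrec negr :: "(int \<Rightarrow> int \<Rightarrow> complex) \<Rightarrow> nat \<Rightarrow> int \<Rightarrow> complex" where
  "negr W 0 = delta0 1"
| "negr W (Suc i) = bwd W (- int i - 1) (if i = 0 then delta0 2 else negr W i)"

definition fam_of :: "(int \<Rightarrow> int \<Rightarrow> complex) \<Rightarrow> int \<Rightarrow> int \<Rightarrow> complex" where
  "fam_of W n k = (if n \<ge> 0 then posr W (nat n) k else negr W (nat (-n)) k)"

context wts
begin

lemma posr_neg: "k < 0 \<Longrightarrow> posr W i k = 0"
  by (induction i arbitrary: k) (auto simp: delta0_def)

lemma posr_0: "posr W i 0 = 1"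
  by (induction i) (auto simp: delta0_def posr_neg)

lemma posr_above: "k > int i \<Longrightarrow> posr W i k = 0"
  by (induction i arbitrary: k) (auto simp: delta0_def)

lemma posr_diag: "posr W i (int i) = 1"
proof (induction i)
  case 0 then show ?case by (simp add: delta0_def)
next
  case (Suc i)
  have "posr W (Suc i) (int i + 1) = posr W i (int i + 1) + posr W i (int i) * W (int i + 1) 0"
    by simp
  then show ?case using Suc posr_above[of i "int i + 1"] W0 by (simp add: add.commute)
qed

lemma bwd_le0: "k \<le> 0 \<Longrightarrow> bwd W n h k = dnv W n h (nat (-k))"
  by (cases "k = 0") (auto simp: bwd_def)

lemma bwd_rec: "h k = bwd W n h k + bwd W n h (k-1) * W k (n+1-k)"
proof (cases "k \<ge> 1")
  case True
  then have "nat k = Suc (nat (k-1))" by simp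
  then have "upv W n h (nat k) = h k - upv W n h (nat (k-1)) * W k (n+1-k)"
    using True by (simp add: algebra_simps)
  then show ?thesis using True by (simp add: bwd_def)
next
  case False
  then have "nat (-(k-1)) = Suc (nat (-k))" by simp
  then have "dnv W n h (nat (-(k-1))) = (h k - dnv W n h (nat (-k))) / W k (n+1-k)"
    using False by (simp add: algebra_simps)
  then show ?thesis using False bwd_le0[of k] bwd_le0[of "k-1"] Wnz[of k "n+1-k"]
    by (simp add: field_simps)
qed

lemma negr_0: "negr W (Suc i) 0 = 1"
  by (simp add: bwd_def)

lemma negr_diag:
  "negr W (Suc i) (- int i - 1) = 1 \<and> (\<forall>k. - int i - 1 < k \<and> k < 0 \<longrightarrow> negr W (Suc i) k = 0)"
proof (induction i)
  case 0
  have "dnv W (-1) (delta0 2) 1 = 1" using W0 by (simp add: delta0_def)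
  then show ?case by (simp add: bwd_def)
next
  case (Suc i)
  note IHo = Suc.IH
  define n where "n = - int (Suc i) - 1"
  define h where "h = negr W (Suc i)"
  have nr: "negr W (Suc (Suc i)) = bwd W n h" by (simp add: n_def h_def)
  have z: "dnv W n h j = 0" if "1 \<le> j" "j \<le> Suc i" for j
    using that
  proof (induction j)
    case 0 then show ?case by simp
  next
    case (Suc j)
    show ?case
    proof (cases "j = 0")
      case True
      then show ?thesis using negr_0[of i] by (simp add: h_def)
    next
      case False
      have "- int i - 1 < - int j" "- int j < 0" using Suc.prems False by auto
      then have "h (- int j) = 0" using IHo unfolding h_def by blast
      then show ?thesis using Suc False by simp
    qed
  qed
  have "dnv W n h (Suc (Suc i)) = (h (- int (Suc i)) - dnv W n h (Suc i)) / W (- int (Suc i)) (n + int (Suc i) + 1)"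
    by (simp only: dnv.simps(2))
  also have "\<dots> = 1"
  proof -
    have e: "- int (Suc i) = - int i - 1" by simp
    have A: "h (- int (Suc i)) = 1" unfolding h_def e using IHo by blast
    have B: "dnv W n h (Suc i) = 0" using z[of "Suc i"] by simp
    have C: "W (- int (Suc i)) (n + int (Suc i) + 1) = 1" using W0 by (simp add: n_def)
    show ?thesis by (simp only: A B C) simp
  qed
  finally have d: "negr W (Suc (Suc i)) (- int (Suc i) - 1) = 1"
    unfolding nr by (simp add: bwd_def nat_add_distrib)
  have "negr W (Suc (Suc i)) k = 0" if "- int (Suc i) - 1 < k" "k < 0" for k
  proof -
    have "nat (-k) \<ge> 1" "nat (-k) \<le> Suc i" using that by auto
    then show ?thesis unfolding nr using that z by (simp add: bwd_def)
  qed
  then show ?case using d by blast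
qed

end



context wts
begin

lemma fam_exists: "famW W (fam_of W)"
  unfolding famW_def
proof (intro conjI allI impI)
  fix n :: int
  show "fam_of W n 0 = 1"
  proof (cases "n \<ge> 0")
    case True then show ?thesis by (simp add: fam_of_def posr_0)
  next
    case False
    then have "nat (-n) = Suc (nat (-n) - 1)" by simp
    then have "fam_of W n 0 = negr W (Suc (nat (-n) - 1)) 0" using False by (simp add: fam_of_def)
    then show ?thesis by (simp only: negr_0)
  qed
next
  fix n :: int
  show "fam_of W n n = 1"
  proof (cases "n \<ge> 0")
    case True then show ?thesis using posr_diag[of "nat n"] by (simp add: fam_of_def)
  next
    case False
    define i where "i = nat (-n) - 1"
    have e1: "nat (-n) = Suc i" and e2: "n = - int i - 1" using False by (auto simp: i_def)
    show ?thesis using False negr_diag[of i] unfolding fam_of_def e1 by (simp add: e2)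
  qed
next
  fix n k :: int
  assume nk: "(n + 1, k) \<noteq> (0, 0)"
  show "fam_of W (n + 1) k = fam_of W n k + fam_of W n (k - 1) * W k (n + 1 - k)"
  proof (cases "n \<ge> 0")
    case True
    then have "nat (n+1) = Suc (nat n)" by simp
    then show ?thesis using True by (simp add: fam_of_def)
  next
    case False
    define i where "i = nat (-n-1)"
    have e1: "nat (-n) = Suc i" and e2: "n = - int i - 1" using False by (auto simp: i_def)
    define h where "h = (if i = 0 then delta0 2 else negr W i)"
    have "fam_of W n = negr W (Suc i)"
      using False by (auto simp: fam_of_def e1 intro!: ext)
    also have "\<dots> = bwd W n h" by (simp add: h_def e2)
    finally have fn: "fam_of W n = bwd W n h" .
    have "h k = fam_of W (n+1) k"
    proof (cases "i = 0")
      case True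
      then have "n + 1 = 0" using e2 by simp
      then show ?thesis using nk True by (simp add: h_def fam_of_def delta0_def)
    next
      case False
      then show ?thesis by (simp add: h_def fam_of_def e2)
    qed
    then show ?thesis using bwd_rec[of h k n] fn by simp
  qed
qed

lemma fam_ex1: "\<exists>!f. famW W f"
  using fam_exists fam_unique by blast

lemma fam_the: "famW W (THE f. famW W f)"
  using theI'[OF fam_ex1] .

end



lemma wts_gprod:
  assumes "\<And>s t. w s t \<noteq> 0" shows "wts (\<lambda>s t. gprod 1 t (w s))"
proof
  fix s t show "gprod 1 t (w s) \<noteq> 0" by (rule gprod_nonzero) (rule assms)
qed simp

lemma main_abs:
  fixes w :: "int \<Rightarrow> int \<Rightarrow> complex" and n :: int
    and f :: "int \<Rightarrow> int \<Rightarrow> complex" and C :: "int \<Rightarrow> int \<Rightarrow> int \<Rightarrow> complex"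
  assumes wnz: "\<And>s t. w s t \<noteq> 0"
    and f: "famW (\<lambda>s t. gprod 1 t (w s)) f"
    and C: "\<And>j. famW (\<lambda>s t. gprod 1 t (\<lambda>i. w (s+j) (i+n-j))) (C j)"
  shows "\<forall>k. k \<le> n + m \<longrightarrow> f (n+m) k = gsum (k-m) n (\<lambda>j. f n j * C j m (k-j)
            * gprod 1 (k-j) (\<lambda>i. gprod 1 (n-j) (w (i+j))))"
proof -
  define W where "W = (\<lambda>s t. gprod 1 t (w s))"
  define Wj where "Wj = (\<lambda>j s t. gprod 1 t (\<lambda>i. w (s+j) (i+n-j)))"
  interpret wts W unfolding W_def by (rule wts_gprod[OF wnz])
  have wj: "wts (Wj j)" for j unfolding Wj_def by (rule wts_gprod) (simp add: wnz)
  have f': "famW W f" using f unfolding W_def .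
  have C': "famW (Wj j) (C j)" for j using C unfolding Wj_def .
  define P where "P = (\<lambda>k j. gprod 1 (k-j) (\<lambda>i. W (i+j) (n-j)))"
  define T where "T = (\<lambda>m k j. f n j * C j m (k-j) * P k j)"
  define R where "R = (\<lambda>m k. gsum (k-m) n (T m k))"
  have KP: "P k j * Wj j (k-j) (m+1-(k-j)) = P (k-1) j * W k (n+m+1-k)" for k j m
  proof -
    have "P k j = P (k-1) j * W k (n-j)"
      unfolding P_def using gprod_step[of "\<lambda>i. W (i+j) (n-j)" 1 "k-j"] Wnz
      by (simp add: algebra_simps)
    moreover have "W k (n+m+1-k) = W k (n-j) * Wj j (k-j) (m+1-(k-j))"
      using gprod_shift[of "w k" "n-j" "m+1-(k-j)"] wnz unfolding W_def Wj_def
      by (simp add: algebra_simps)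
    ultimately show ?thesis by simp
  qed
  have Tgen: "T m (k-1) j * W k (n+m+1-k) = f n j * C j m (k-j-1) * (P k j * Wj j (k-j) (m+1-(k-j)))" for m k j
    unfolding T_def KP by (simp add: algebra_simps)
  have Tstep: "T (m+1) k j = T m k j + T m (k-1) j * W k (n+m+1-k) - (if m = -1 \<and> j = k then f n k else 0)"
    for m k j
  proof (cases "m = -1 \<and> j = k")
    case True
    have "T (m+1) k j = f n k" using True famW_diag[OF C'[of k], of 0] by (simp add: T_def P_def)
    moreover have "T m k j = f n k" using True famW_0[OF C'[of k], of "-1"] by (simp add: T_def P_def)
    moreover have "T m (k-1) j * W k (n+m+1-k) = f n k"
      unfolding Tgen using True famW_diag[OF C'[of k], of "-1"] wts.W0[OF wj[of k]] by (simp add: P_def)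
    ultimately show ?thesis using True by simp
  next
    case False
    then have "(m+1, k-j) \<noteq> (0,0)" by auto
    then have "C j (m+1) (k-j) = C j m (k-j) + C j m (k-j-1) * Wj j (k-j) (m+1-(k-j))"
      using famW_rec[OF C'[of j], of m "k-j"] by simp
    moreover have "(if m = -1 \<and> j = k then f n k else 0) = 0" by (rule if_not_P[OF False])
    ultimately show ?thesis unfolding Tgen by (simp add: T_def algebra_simps)
  qed
  have Rstep: "R (m+1) k = R m k + R m (k-1) * W k (n+m+1-k)" if km: "k \<le> n+m" for m k
  proof -
    define E where "E = (\<lambda>j. if m = -1 \<and> j = k then f n k else 0)"
    have "R (m+1) k = gsum (k-m-1) n (\<lambda>j. T m k j + T m (k-1) j * W k (n+m+1-k) - E j)"
    proof -
      have "T (m+1) k = (\<lambda>j. T m k j + T m (k-1) j * W k (n+m+1-k) - E j)"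
        unfolding E_def by (rule ext) (rule Tstep)
      moreover have "k - (m+1) = k-m-1" by simp
      ultimately show ?thesis unfolding R_def by (simp only:)
    qed
    also have "\<dots> = gsum (k-m-1) n (T m k) + gsum (k-m-1) n (T m (k-1)) * W k (n+m+1-k) - gsum (k-m-1) n E"
      by (rule gsum_lin)
    also have "gsum (k-m-1) n (T m k) = T m k (k-m-1) + R m k"
      unfolding R_def using gsum_step[of "k-m-1" n "T m k"] by simp
    also have "gsum (k-m-1) n (T m (k-1)) = R m (k-1)"
      unfolding R_def by (simp add: algebra_simps)
    also have "T m k (k-m-1) = gsum (k-m-1) n E"
    proof (cases "m = -1")
      case True
      have "T m k (k-m-1) = f n k" using True famW_0[OF C'[of k], of "-1"] by (simp add: T_def P_def)
      moreover have "gsum (k-m-1) n E = f n k"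
        using True km gsum_delta[of k n "f n k"] by (simp add: E_def)
      ultimately show ?thesis by simp
    next
      case False
      have "C (k-m-1) m (m+1) = 0" using wts.fam_above[OF wj C' False] .
      then have "T m k (k-m-1) = 0" by (simp add: T_def)
      moreover have "E = (\<lambda>_. 0)" using False by (simp add: E_def)
      ultimately show ?thesis by (simp add: gsum_zero)
    qed
    finally show ?thesis by simp
  qed
  have Rdiag: "R m (n+m) = 1" for m
  proof -
    have "P (n+m) n = 1" unfolding P_def using W0 by (simp add: gprod_one)
    then show ?thesis unfolding R_def
      using gsum_single[of n "T m (n+m)"] famW_diag[OF f'] famW_diag[OF C'[of n]]
      by (simp add: T_def)
  qed
  have R0: "R 0 k = f n k" if "k \<le> n" for k
  proof -
    have "T 0 k = (\<lambda>j. if j = k then f n k else 0)"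
      using wts.fam_row0[OF wj C'] by (auto simp: T_def P_def intro!: ext)
    then show ?thesis unfolding R_def using gsum_delta[OF that] by simp
  qed
  have main: "\<forall>k. k \<le> n + m \<longrightarrow> f (n+m) k = R m k" for m
  proof (induction m rule: int_induct[where k=0])
    case base then show ?case using R0 by simp
  next
    case (step1 i)
    show ?case
    proof (intro allI impI)
      fix k assume k: "k \<le> n + (i+1)"
      show "f (n + (i+1)) k = R (i+1) k"
      proof (cases "k = n+(i+1)")
        case True then show ?thesis using famW_diag[OF f'] Rdiag[of "i+1"] by simp
      next
        case False
        then have k': "k \<le> n+i" using k by simp
        then have "(n+i+1, k) \<noteq> (0,0)" by auto
        then have "f (n+i+1) k = f (n+i) k + f (n+i) (k-1) * W k (n+i+1-k)"
          using famW_rec[OF f', of "n+i" k] by simp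
        moreover have "R (i+1) k = R i k + R i (k-1) * W k (n+i+1-k)" using Rstep[OF k'] .
        ultimately show ?thesis using step1(2) k' by (simp add: add.assoc)
      qed
    qed
  next
    case (step2 i)
    have dn: "f (n+(i-1)) (n+(i-1)-int d) = R (i-1) (n+(i-1)-int d)" for d
    proof (induction d)
      case 0 then show ?case using famW_diag[OF f'] Rdiag[of "i-1"] by simp
    next
      case (Suc d)
      define kk where "kk = n+(i-1)-int d"
      have kk: "kk \<le> n+(i-1)" by (simp add: kk_def)
      then have "(n+(i-1)+1, kk) \<noteq> (0,0)" by auto
      then have e1: "f (n+(i-1)+1) kk = f (n+(i-1)) kk + f (n+(i-1)) (kk-1) * W kk (n+(i-1)+1-kk)"
        using famW_rec[OF f', of "n+(i-1)" kk] by simp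
      have e2: "R (i-1+1) kk = R (i-1) kk + R (i-1) (kk-1) * W kk (n+(i-1)+1-kk)"
        using Rstep[OF kk] by simp
      have e3: "f (n+(i-1)+1) kk = R (i-1+1) kk" using step2(2) kk by simp
      have e4: "f (n+(i-1)) kk = R (i-1) kk" using Suc by (simp add: kk_def)
      have "f (n+(i-1)) (kk-1) * W kk (n+(i-1)+1-kk) = R (i-1) (kk-1) * W kk (n+(i-1)+1-kk)"
        using e1 e2 e3 e4 by (metis add_left_cancel)
      then have "f (n+(i-1)) (kk-1) = R (i-1) (kk-1)" using Wnz by (metis mult_right_cancel)
      moreover have "kk - 1 = n+(i-1)-int (Suc d)" by (simp add: kk_def)
      ultimately show ?case by metis
    qed
    show ?case
    proof (intro allI impI)
      fix k assume "k \<le> n + (i-1)"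
      then have "k = n+(i-1) - int (nat (n+(i-1)-k))" by simp
      then show "f (n + (i-1)) k = R (i-1) k" using dn by metis
    qed
  qed
  show ?thesis using main[of m] unfolding R_def T_def P_def W_def by simp
qed




lemma ebinom_fam:
  assumes nz: "\<And>s t. ew a b q p s t \<noteq> 0"
  shows "famW (\<lambda>s t. gprod 1 t (ew a b q p s)) (ebinom a b q p)"
proof -
  interpret wts "\<lambda>s t. gprod 1 t (ew a b q p s)" by (rule wts_gprod[OF nz])
  have fe: "ebinom_family a b q p = famW (\<lambda>s t. gprod 1 t (ew a b q p s))"
    by (rule ext) (simp add: ebinom_family_def famW_def eW_def)
  have "ebinom a b q p = (THE f. famW (\<lambda>s t. gprod 1 t (ew a b q p s)) f)"
    by (intro ext) (simp add: ebinom_def fe)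
  then show ?thesis using fam_the by simp
qed

lemma pq_mul: "(q::complex) \<noteq> 0 \<Longrightarrow> x + y = z \<Longrightarrow> c * q powi x * q powi y = c * q powi z"
  by (metis power_int_add mult.assoc)

lemma pq_div: "(q::complex) \<noteq> 0 \<Longrightarrow> b \<noteq> 0 \<Longrightarrow> x + y - u = z \<Longrightarrow>
   a * q powi x * q powi y / (b * q powi u) = a * q powi z / b"
proof -
  assume q: "q \<noteq> 0" and b: "b \<noteq> 0" and e: "x + y - u = z"
  have "q powi z = q powi x * q powi y / q powi u"
    using e q by (metis power_int_add power_int_diff)
  then show ?thesis using q b by (simp add: field_simps)
qed

lemma ew_shift:
  assumes q: "q \<noteq> 0" and b: "b \<noteq> 0"
  shows "ew (a * q powi (2*n - j)) (b * q powi (n + j)) q p s t = ew a b q p (s+j) (t+n-j)"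
proof -
  have h1: "a * q powi (2*n - j) * q powi (s + 2*t) = a * q powi ((s+j) + 2*(t+n-j))"
    by (rule pq_mul[OF q]) simp
  have h2: "b * q powi (n + j) * q powi (2 * s + t - 2) = b * q powi (2 * (s+j) + (t+n-j) - 2)"
    by (rule pq_mul[OF q]) simp
  have h3: "a * q powi (2*n - j) * q powi (t - s - 1) / (b * q powi (n + j)) = a * q powi ((t+n-j) - (s+j) - 1) / b"
    by (rule pq_div[OF q b]) simp
  have h4: "a * q powi (2*n - j) * q powi (s + 2*t - 2) = a * q powi ((s+j) + 2*(t+n-j) - 2)"
    by (rule pq_mul[OF q]) simp
  have h5: "b * q powi (n + j) * q powi (2 * s + t) = b * q powi (2 * (s+j) + (t+n-j))"
    by (rule pq_mul[OF q]) simp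
  have h6: "a * q powi (2*n - j) * q powi (t - s + 1) / (b * q powi (n + j)) = a * q powi ((t+n-j) - (s+j) + 1) / b"
    by (rule pq_div[OF q b]) simp
  show ?thesis unfolding ew_def by (simp only: h1 h2 h3 h4 h5 h6)
qed

lemma ew_nz:
  assumes "q \<noteq> 0"
    and "\<And>r::int. theta p (a * q powi r) \<noteq> 0"
    and "\<And>r::int. theta p (b * q powi r) \<noteq> 0"
    and "\<And>r::int. theta p (a * q powi r / b) \<noteq> 0"
  shows "ew a b q p s t \<noteq> 0"
  unfolding ew_def using assms by simp

theorem corollary5:
  fixes n m k :: int and a b q p :: complex
  assumes "k \<le> n + m" and "norm p < 1"
    and "a \<noteq> 0" and "b \<noteq> 0" and "q \<noteq> 0"
    and "\<And>r::int. theta p (a * q powi r) \<noteq> 0"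
    and "\<And>r::int. theta p (b * q powi r) \<noteq> 0"
    and "\<And>r::int. theta p (a * q powi r / b) \<noteq> 0"
  shows "ebinom a b q p (n + m) k =
    gsum (k - m) n (\<lambda>j. ebinom a b q p n j
       * ebinom (a * q powi (2*n - j)) (b * q powi (n + j)) q p m (k - j)
       * gprod 1 (k - j) (\<lambda>i. eW a b q p (i + j) (n - j)))"
proof -
  define w where "w = ew a b q p"
  have wnz: "\<And>s t. w s t \<noteq> 0" unfolding w_def using ew_nz assms(5-8) by blast
  have f: "famW (\<lambda>s t. gprod 1 t (w s)) (ebinom a b q p)"
    unfolding w_def by (rule ebinom_fam) (use wnz w_def in simp)
  have C: "famW (\<lambda>s t. gprod 1 t (\<lambda>i. w (s+j) (i+n-j))) (ebinom (a * q powi (2*n - j)) (b * q powi (n + j)) q p)"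
    for j
  proof -
    have sh: "ew (a * q powi (2*n - j)) (b * q powi (n + j)) q p s i = w (s+j) (i+n-j)" for s i
      unfolding w_def by (rule ew_shift[OF assms(5) assms(4)])
    have "famW (\<lambda>s t. gprod 1 t (ew (a * q powi (2*n - j)) (b * q powi (n + j)) q p s))
            (ebinom (a * q powi (2*n - j)) (b * q powi (n + j)) q p)"
      by (rule ebinom_fam) (simp add: sh wnz)
    moreover have "ew (a * q powi (2*n - j)) (b * q powi (n + j)) q p s = (\<lambda>i. w (s+j) (i+n-j))" for s
      by (rule ext) (rule sh)
    ultimately show ?thesis by simp
  qed
  have "\<forall>k. k \<le> n + m \<longrightarrow> ebinom a b q p (n+m) k = gsum (k-m) n (\<lambda>j. ebinom a b q p n j
     * ebinom (a * q powi (2*n - j)) (b * q powi (n + j)) q p m (k-j)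
            * gprod 1 (k-j) (\<lambda>i. gprod 1 (n-j) (w (i+j))))"
    by (rule main_abs[OF wnz f C])
  then show ?thesis using assms(1) unfolding w_def eW_def by simp
qed


end
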